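(* Every threshold tolerance graph is a pairwise compatibility graph.
   Context: All graphs are finite and simple. A graph $G=(V,E)$ is a threshold tolerance graph if there exist functions $g,t:V\to\mathbb{R}^+$ (positive reals) such that for all distinct $x,y\in V$, $\{x,y\}\in E$ if and only if $g(x)+g(y)\ge\min(t(x),t(y))$. A graph $G=(V,E)$ is a pairwise compatibility graph (PCG) if there exist a tree $T$ with non-negative real edge weights, whose set of leaves is exactly $V$, and two non-negative real numbers $d_{min}\le d_{max}$ such that for all distinct $u,v\in V$, $(u,v)\in E$ if and only if $d_{min}\le d_T(u,v)\le d_{max}$, where $d_T(u,v)$ is the sum of the weights of the edges on the unique path from $u$ to $v$ in $T$. *)

theory Defs
  imports Complex_Main
begin

definition simple_graph :: "'a set \<Rightarrow> 'a set set \<Rightarrow> bool" where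
  "simple_graph V E \<longleftrightarrow> finite V \<and>
     E \<subseteq> {{x, y} | x y. x \<in> V \<and> y \<in> V \<and> x \<noteq> y}"

definition threshold_tolerance_graph :: "'a set \<Rightarrow> 'a set set \<Rightarrow> bool" where
  "threshold_tolerance_graph V E \<longleftrightarrow> simple_graph V E \<and>
     (\<exists>g t :: 'a \<Rightarrow> real. (\<forall>x\<in>V. g x > 0 \<and> t x > 0) \<and>
        (\<forall>x\<in>V. \<forall>y\<in>V. x \<noteq> y \<longrightarrow>
           ({x, y} \<in> E \<longleftrightarrow> g x + g y \<ge> min (t x) (t y))))"

definition path_edges :: "'n list \<Rightarrow> 'n set list" where
  "path_edges p = map (\<lambda>(a, b). {a, b}) (zip p (tl p))"

definition is_walk :: "'n set set \<Rightarrow> 'n list \<Rightarrow> bool" where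
  "is_walk Ed p \<longleftrightarrow> p \<noteq> [] \<and> set (path_edges p) \<subseteq> Ed"

definition simple_path :: "'n set set \<Rightarrow> 'n \<Rightarrow> 'n \<Rightarrow> 'n list \<Rightarrow> bool" where
  "simple_path Ed x y p \<longleftrightarrow> is_walk Ed p \<and> distinct p \<and> hd p = x \<and> last p = y"

definition is_tree :: "'n set \<Rightarrow> 'n set set \<Rightarrow> bool" where
  "is_tree N Ed \<longleftrightarrow> N \<noteq> {} \<and> simple_graph N Ed \<and>
     (\<forall>x\<in>N. \<forall>y\<in>N. \<exists>p. simple_path Ed x y p) \<and>
     \<not> (\<exists>p. is_walk Ed p \<and> distinct p \<and> length p \<ge> 3 \<and> {last p, hd p} \<in> Ed)"

definition degree :: "'n set set \<Rightarrow> 'n \<Rightarrow> nat" where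
  "degree Ed v = card {e \<in> Ed. v \<in> e}"

text \<open>Leaves: nodes of degree at most 1 (degree 0 only occurs for the one-node tree).\<close>
definition leaves :: "'n set \<Rightarrow> 'n set set \<Rightarrow> 'n set" where
  "leaves N Ed = {v \<in> N. degree Ed v \<le> 1}"

definition tree_dist :: "'n set set \<Rightarrow> ('n set \<Rightarrow> real) \<Rightarrow> 'n \<Rightarrow> 'n \<Rightarrow> real" where
  "tree_dist Ed w x y = sum_list (map w (path_edges (THE p. simple_path Ed x y p)))"

text \<open>Pairwise compatibility graph. Tree nodes are taken in the type ('a + nat)
  (leaves are the vertices of V, embedded by Inl); every finite tree whose leaf set is V
  is isomorphic to such a tree.\<close>
definition pcg :: "'a set \<Rightarrow> 'a set set \<Rightarrow> bool" where
  "pcg V E \<longleftrightarrow> simple_graph V E \<and>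
     (\<exists>(N :: ('a + nat) set) Ed (w :: ('a + nat) set \<Rightarrow> real) dmin dmax.
        is_tree N Ed \<and> leaves N Ed = Inl ` V \<and> (\<forall>e\<in>Ed. w e \<ge> 0) \<and>
        0 \<le> dmin \<and> dmin \<le> dmax \<and>
        (\<forall>u\<in>V. \<forall>v\<in>V. u \<noteq> v \<longrightarrow>
           ({u, v} \<in> E \<longleftrightarrow>
              dmin \<le> tree_dist Ed w (Inl u) (Inl v) \<and> tree_dist Ed w (Inl u) (Inl v) \<le> dmax)))"

end

theory Submission
  imports Defs
begin

lemma pe_nil[simp]: "path_edges [] = []" by (simp add: path_edges_def)
lemma pe_single[simp]: "path_edges [a] = []" by (simp add: path_edges_def)
lemma pe_cons2[simp]: "path_edges (a # b # p) = {a,b} # path_edges (b # p)"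
  by (simp add: path_edges_def)

lemma pe_cons: "p \<noteq> [] \<Longrightarrow> path_edges (a # p) = {a, hd p} # path_edges p"
  by (cases p) auto

lemma walk_single[simp]: "is_walk Ed [a]" by (simp add: is_walk_def)
lemma walk_cons2[simp]: "is_walk Ed (a # b # p) \<longleftrightarrow> {a,b} \<in> Ed \<and> is_walk Ed (b # p)"
  by (auto simp: is_walk_def)

lemma walk_iff: "is_walk Ed p \<longleftrightarrow> p \<noteq> [] \<and> (\<forall>i. Suc i < length p \<longrightarrow> {p!i, p!Suc i} \<in> Ed)"
proof (induction p rule: induct_list012)
  case (3 x y zs)
  show ?case
    apply (simp only: walk_cons2 3(2))
    apply auto
    using less_Suc_eq_0_disj by fastforce
qed (auto simp: is_walk_def)

lemma walk_edge: "is_walk Ed p \<Longrightarrow> Suc i < length p \<Longrightarrow> {p!i, p!Suc i} \<in> Ed"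
  by (simp add: walk_iff)

lemma pe_snoc: "xs \<noteq> [] \<Longrightarrow> path_edges (xs @ [a]) = path_edges xs @ [{last xs, a}]"
proof (induction xs rule: induct_list012)
  case (3 x y zs)
  then show ?case by (cases zs) auto
qed auto

lemma pe_rev: "path_edges (rev p) = rev (path_edges p)"
proof (induction p)
  case (Cons a p)
  show ?case
  proof (cases "p = []")
    case False
    have "path_edges (rev (a # p)) = path_edges (rev p @ [a])" by simp
    also have "\<dots> = path_edges (rev p) @ [{last (rev p), a}]" using False by (simp add: pe_snoc)
    also have "\<dots> = rev (path_edges p) @ [{a, hd p}]" using False Cons by (auto simp: last_rev insert_commute)
    finally show ?thesis using pe_cons[OF False] by simp
  qed simp
qed simp

lemma walk_rev: "is_walk Ed (rev p) \<longleftrightarrow> is_walk Ed p"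
  by (simp add: is_walk_def pe_rev)

lemma simple_path_rev: "simple_path Ed a b p \<Longrightarrow> simple_path Ed b a (rev p)"
  by (auto simp: simple_path_def walk_rev hd_rev last_rev)

lemma distinct_hd_last: "distinct p \<Longrightarrow> p \<noteq> [] \<Longrightarrow> hd p = last p \<Longrightarrow> p = [hd p]"
  by (cases p) (auto split: if_splits)

lemma simple_path_self: "simple_path Ed a a p \<Longrightarrow> p = [a]"
  using distinct_hd_last by (fastforce simp: simple_path_def is_walk_def)

lemma sg_edge: "simple_graph N Ed \<Longrightarrow> {a,b} \<in> Ed \<Longrightarrow> a \<in> N \<and> b \<in> N \<and> a \<noteq> b"
  unfolding simple_graph_def by (auto simp: doubleton_eq_iff)

lemma walk_nodes: assumes "simple_graph N Ed" "is_walk Ed p" "hd p \<in> N" shows "set p \<subseteq> N"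
proof
  fix x assume "x \<in> set p"
  then obtain i where i: "i < length p" "x = p ! i" by (auto simp: in_set_conv_nth)
  show "x \<in> N"
  proof (cases i)
    case 0 then show ?thesis using i assms(3) assms(2) by (simp add: hd_conv_nth is_walk_def)
  next
    case (Suc j)
    then have "{p!j, p!Suc j} \<in> Ed" using walk_edge[OF assms(2)] i by simp
    then show ?thesis using sg_edge[OF assms(1)] i Suc by blast
  qed
qed

lemma unique_rev: assumes "\<exists>!p. simple_path Ed a b p" shows "\<exists>!p. simple_path Ed b a p"
proof -
  obtain p where p: "simple_path Ed a b p" using assms by blast
  show ?thesis
  proof (rule ex1I[of _ "rev p"])
    show "simple_path Ed b a (rev p)" using simple_path_rev[OF p] .
    fix q assume "simple_path Ed b a q"
    then have "simple_path Ed a b (rev q)" by (rule simple_path_rev)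
    then have "rev q = p" using assms p by blast
    then show "q = rev p" by auto
  qed
qed

lemma the_rev: assumes "\<exists>!p. simple_path Ed a b p"
  shows "(THE p. simple_path Ed b a p) = rev (THE p. simple_path Ed a b p)"
proof -
  have "simple_path Ed a b (THE p. simple_path Ed a b p)" using theI'[OF assms] .
  then have "simple_path Ed b a (rev (THE p. simple_path Ed a b p))" by (rule simple_path_rev)
  then show ?thesis using the1_equality[OF unique_rev[OF assms]] by blast
qed

lemma dist_sym: assumes "\<exists>!p. simple_path Ed a b p"
  shows "tree_dist Ed w b a = tree_dist Ed w a b"
  unfolding tree_dist_def the_rev[OF assms] pe_rev by (simp add: rev_map[symmetric] sum_list_rev)

lemma dist_self: "tree_dist Ed w a a = 0"
proof -
  have "simple_path Ed a a [a]" by (simp add: simple_path_def)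
  then have "(THE p. simple_path Ed a a p) = [a]" by (rule the_equality) (rule simple_path_self)
  then show ?thesis by (simp add: tree_dist_def)
qed


definition utree :: "'n set \<Rightarrow> 'n set set \<Rightarrow> bool" where
  "utree N Ed \<longleftrightarrow> is_tree N Ed \<and> (\<forall>a\<in>N. \<forall>b\<in>N. \<exists>!p. simple_path Ed a b p)"

lemma walk_mono: "is_walk Ed p \<Longrightarrow> Ed \<subseteq> Ed' \<Longrightarrow> is_walk Ed' p"
  by (auto simp: is_walk_def)

lemma sg_finite_edges: "simple_graph N Ed \<Longrightarrow> finite Ed"
proof -
  assume a: "simple_graph N Ed"
  then have "Ed \<subseteq> Pow N" unfolding simple_graph_def by auto
  moreover have "finite (Pow N)" using a by (simp add: simple_graph_def)
  ultimately show ?thesis by (rule finite_subset)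
qed

lemma deg_out: assumes "simple_graph N Ed" "a \<notin> N" shows "degree Ed a = 0"
proof -
  have "{e \<in> Ed. a \<in> e} = {}" using assms unfolding simple_graph_def by blast
  then show ?thesis unfolding degree_def by (metis card.empty)
qed

lemma utree_single: "utree {a} {}"
proof -
  have sp: "simple_path {} a a p \<longleftrightarrow> p = [a]" for p
    using simple_path_self[of "{}" a p] by (auto simp: simple_path_def)
  have nc: "\<not> (is_walk {} p \<and> length p \<ge> 3)" for p
  proof
    assume h: "is_walk {} p \<and> length p \<ge> 3"
    then have "Suc 0 < length p" by simp
    then have "{p!0, p!Suc 0} \<in> {}" using h walk_edge[of "{}" p 0] by simp
    then show False by simp
  qed
  show ?thesis unfolding utree_def is_tree_def simple_graph_def using sp nc by auto
qed

locale ext =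
  fixes N :: "'n set" and Ed u v
  assumes T: "utree N Ed" and u: "u \<in> N" and v: "v \<notin> N"
begin

abbreviation "N' \<equiv> insert v N"
abbreviation "Ed' \<equiv> insert {v,u} Ed"

lemma tree: "is_tree N Ed" using T by (simp add: utree_def)
lemma sg: "simple_graph N Ed" using tree by (simp add: is_tree_def)
lemma uniq: "a \<in> N \<Longrightarrow> b \<in> N \<Longrightarrow> \<exists>!p. simple_path Ed a b p" using T by (simp add: utree_def)
lemma vu: "v \<noteq> u" using u v by auto

lemma nb1: "{a,v} \<in> Ed' \<Longrightarrow> a \<noteq> v \<Longrightarrow> a = u"
  using sg_edge[OF sg, of a v] v by (auto simp: doubleton_eq_iff)
lemma nb2: "{v,a} \<in> Ed' \<Longrightarrow> a \<noteq> v \<Longrightarrow> a = u"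
  using nb1 by (simp add: insert_commute)

lemma walk_down: assumes "is_walk Ed' p" "v \<notin> set p" shows "is_walk Ed p"
  unfolding walk_iff
proof (intro conjI allI impI)
  show "p \<noteq> []" using assms(1) by (simp add: is_walk_def)
  fix i assume i: "Suc i < length p"
  have "{p!i, p!Suc i} \<in> Ed'" using walk_edge[OF assms(1) i] .
  moreover have "{p!i, p!Suc i} \<noteq> {v,u}"
  proof
    assume "{p!i, p!Suc i} = {v,u}"
    then have "v \<in> {p!i, p!Suc i}" by blast
    moreover have "p!i \<in> set p" "p!Suc i \<in> set p" using i by simp_all
    ultimately show False using assms(2) by auto
  qed
  ultimately show "{p!i, p!Suc i} \<in> Ed" by simp
qed

lemma interior: assumes "is_walk Ed' p" "distinct p" "p ! i = v" "0 < i" "Suc i < length p"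
  shows False
proof -
  obtain j where j: "i = Suc j" using assms(4) gr0_implies_Suc by blast
  have e1: "{p!j, v} \<in> Ed'" using walk_edge[OF assms(1), of j] assms(3,5) j by simp
  have e2: "{v, p!Suc i} \<in> Ed'" using walk_edge[OF assms(1), of i] assms(3,5) by simp
  have d1: "p!j \<noteq> v" using nth_eq_iff_index_eq[of p j i] assms(2,3,5) j by simp
  have d2: "p!Suc i \<noteq> v" using nth_eq_iff_index_eq[of p "Suc i" i] assms(2,3,5) by simp
  have "p!j = u" using nb1[OF e1 d1] .
  moreover have "p!Suc i = u" using nb2[OF e2 d2] .
  moreover have "p!j \<noteq> p!Suc i" using assms j by (simp add: nth_eq_iff_index_eq)
  ultimately show False by simp
qed

lemma sg': "simple_graph N' Ed'"
  using sg vu unfolding simple_graph_def using u by blast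

lemma acyclic': "\<not> (\<exists>p. is_walk Ed' p \<and> distinct p \<and> length p \<ge> 3 \<and> {last p, hd p} \<in> Ed')"
proof
  assume "\<exists>p. is_walk Ed' p \<and> distinct p \<and> length p \<ge> 3 \<and> {last p, hd p} \<in> Ed'"
  then obtain p where p: "is_walk Ed' p" "distinct p" "length p \<ge> 3" "{last p, hd p} \<in> Ed'" by blast
  have ne: "p \<noteq> []" using p(3) by auto
  have hd: "hd p = p ! 0" using ne by (simp add: hd_conv_nth)
  have lst: "last p = p ! (length p - 1)" using ne by (simp add: last_conv_nth)
  show False
  proof (cases "v \<in> set p")
    case False
    have w: "is_walk Ed p" using walk_down[OF p(1) False] .
    have "{last p, hd p} \<noteq> {v,u}" using False ne by (metis doubleton_eq_iff hd_in_set last_in_set)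
    then have "{last p, hd p} \<in> Ed" using p(4) by simp
    then show False using tree w p unfolding is_tree_def by blast
  next
    case True
    then obtain i where i: "i < length p" "p ! i = v" by (auto simp: in_set_conv_nth)
    consider "i = 0" | "i = length p - 1" | "0 < i \<and> Suc i < length p" using i by linarith
    then show False
    proof cases
      case 1
      have s1: "Suc 0 < length p" using p(3) by simp
      have "{p!0, p!Suc 0} \<in> Ed'" using walk_edge[OF p(1) s1] .
      then have e1: "{v, p!1} \<in> Ed'" using i 1 by simp
      have e2: "{p!(length p - 1), v} \<in> Ed'" using p(4) lst hd i 1 by simp
      have "p!1 \<noteq> v" "p!(length p - 1) \<noteq> v" using p(2) p(3) i 1 nth_eq_iff_index_eq[of p 1 0] nth_eq_iff_index_eq[of p "length p - 1" 0] by auto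
      then have "p!1 = u" "p!(length p - 1) = u" using nb1 nb2 e1 e2 by auto
      moreover have "p!1 \<noteq> p!(length p - 1)" using p(2) p(3) by (simp add: nth_eq_iff_index_eq)
      ultimately show False by simp
    next
      case 2
      have s2: "Suc (length p - 2) < length p" "Suc (length p - 2) = length p - 1" using p(3) by simp_all
      have "{p!(length p - 2), p!Suc (length p - 2)} \<in> Ed'" using walk_edge[OF p(1) s2(1)] .
      then have e1: "{p!(length p - 2), v} \<in> Ed'" using i 2 s2(2) by simp
      have e2: "{v, p!0} \<in> Ed'" using p(4) lst hd i 2 by simp
      have a: "length p - 2 < length p" "length p - 1 < length p" "0 < length p"
        "length p - 2 \<noteq> length p - 1" "0 \<noteq> length p - 1" "length p - 2 \<noteq> 0" using p(3) by auto
      have n1: "p!(length p - 2) \<noteq> p!(length p - 1)" "p!0 \<noteq> p!(length p - 1)"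
        using nth_eq_iff_index_eq[OF p(2) a(1) a(2)] nth_eq_iff_index_eq[OF p(2) a(3) a(2)] a(4,5)
        by blast+
      have "p!(length p - 1) = v" using i 2 by simp
      then have "p!(length p - 2) \<noteq> v" "p!0 \<noteq> v" using n1 by simp_all
      then have "p!(length p - 2) = u" "p!0 = u" using nb1 nb2 e1 e2 by auto
      moreover have "p!(length p - 2) \<noteq> p!0" using nth_eq_iff_index_eq[OF p(2) a(1) a(3)] a(6) by blast
      ultimately show False by simp
    next
      case 3
      then show False using interior[OF p(1) p(2) i(2)] by blast
    qed
  qed
qed

lemma old_path: assumes "a \<in> N" "b \<in> N" "simple_path Ed' a b q" shows "simple_path Ed a b q"
proof -
  have q: "is_walk Ed' q" "distinct q" "hd q = a" "last q = b" using assms(3) by (auto simp: simple_path_def)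
  have ne: "q \<noteq> []" using q(1) by (simp add: is_walk_def)
  have "v \<notin> set q"
  proof
    assume "v \<in> set q"
    then obtain i where i: "i < length q" "q ! i = v" by (auto simp: in_set_conv_nth)
    have "i \<noteq> 0" using i q(3) ne assms(1) v by (metis hd_conv_nth)
    moreover have "i \<noteq> length q - 1" using i q(4) ne assms(2) v by (metis last_conv_nth)
    ultimately have "0 < i \<and> Suc i < length q" using i(1) by linarith
    then show False using interior[OF q(1) q(2) i(2)] by blast
  qed
  then show ?thesis using walk_down q by (simp add: simple_path_def)
qed

lemma old_uniq: assumes "a \<in> N" "b \<in> N"
  shows "\<exists>!p. simple_path Ed' a b p" "(THE p. simple_path Ed' a b p) = (THE p. simple_path Ed a b p)"
proof -
  obtain p where p: "simple_path Ed a b p" using uniq[OF assms] by blast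
  have p': "simple_path Ed' a b p" using p walk_mono[of Ed p Ed'] by (auto simp: simple_path_def)
  have all: "simple_path Ed' a b q \<Longrightarrow> q = p" for q using old_path[OF assms] uniq[OF assms] p by blast
  show "\<exists>!p. simple_path Ed' a b p" using p' all by blast
  have "(THE p. simple_path Ed' a b p) = p" using the_equality[of "\<lambda>q. simple_path Ed' a b q" p] p' all by blast
  moreover have "(THE p. simple_path Ed a b p) = p" by (rule the1_equality[OF uniq[OF assms] p])
  ultimately show "(THE p. simple_path Ed' a b p) = (THE p. simple_path Ed a b p)" by simp
qed

lemma new_path: assumes b: "b \<in> N"
  shows "simple_path Ed' v b q \<longleftrightarrow> q = v # (THE p. simple_path Ed u b p)"
proof -
  define p0 where "p0 = (THE p. simple_path Ed u b p)"
  have p0: "simple_path Ed u b p0" unfolding p0_def using theI'[OF uniq[OF u b]] .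
  have p0ne: "p0 \<noteq> []" using p0 by (simp add: simple_path_def is_walk_def)
  have setp0: "set p0 \<subseteq> N" using walk_nodes[OF sg, of p0] p0 u by (simp add: simple_path_def)
  have fwd: "simple_path Ed' v b (v # p0)"
  proof -
    obtain c r where cr: "p0 = c # r" using p0ne by (cases p0) auto
    have "c = u" using p0 cr by (simp add: simple_path_def)
    then have "is_walk Ed' (v # p0)" using cr p0 walk_mono[of Ed p0 Ed'] by (auto simp: simple_path_def)
    then show ?thesis using p0 setp0 v p0ne by (auto simp: simple_path_def)
  qed
  have bwd: "q = v # p0" if q: "simple_path Ed' v b q" for q
  proof -
    have qq: "is_walk Ed' q" "distinct q" "hd q = v" "last q = b" using q by (auto simp: simple_path_def)
    have "q \<noteq> []" using qq by (simp add: is_walk_def)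
    then obtain q' where q': "q = v # q'" using qq(3) by (cases q) auto
    have q'ne: "q' \<noteq> []" using q' qq(4) b v by auto
    then obtain c r where cr: "q' = c # r" by (cases q') auto
    have "{v, c} \<in> Ed'" using qq(1) q' cr by simp
    moreover have "c \<noteq> v" using qq(2) q' cr by auto
    ultimately have c: "c = u" using nb2 by blast
    have "is_walk Ed' q'" using qq(1) q' cr by simp
    moreover have "v \<notin> set q'" using qq(2) q' by simp
    ultimately have "is_walk Ed q'" using walk_down by blast
    then have "simple_path Ed u b q'" using qq q' cr c q'ne by (auto simp: simple_path_def)
    then have "q' = p0" using p0 uniq[OF u b] by blast
    then show ?thesis using q' by simp
  qed
  show ?thesis using fwd bwd unfolding p0_def[symmetric] by blast
qed

lemma new_uniq: assumes "b \<in> N" shows "\<exists>!p. simple_path Ed' v b p"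
  by (rule ex1I[of _ "v # (THE p. simple_path Ed u b p)"]) (simp_all add: new_path[OF assms])

lemma utree': "utree N' Ed'"
proof -
  have U: "\<exists>!p. simple_path Ed' a b p" if "a \<in> N'" "b \<in> N'" for a b
  proof -
    have "simple_path Ed' v v [v]" by (simp add: simple_path_def)
    then have vv: "\<exists>!p. simple_path Ed' v v p"
      using simple_path_self[of Ed' v] by blast
    show ?thesis
    proof (cases "a = v")
      case True
      then show ?thesis using vv new_uniq that by (cases "b = v") auto
    next
      case False
      then have aN: "a \<in> N" using that by simp
      show ?thesis using that old_uniq(1)[OF aN] unique_rev[OF new_uniq[OF aN]] False by (cases "b = v") auto
    qed
  qed
  have C: "\<forall>x\<in>N'. \<forall>y\<in>N'. \<exists>p. simple_path Ed' x y p"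
  proof (intro ballI)
    fix x y assume "x \<in> N'" "y \<in> N'"
    then show "\<exists>p. simple_path Ed' x y p" using U by (metis ex1_implies_ex)
  qed
  have E: "\<forall>x\<in>N'. \<forall>y\<in>N'. \<exists>!p. simple_path Ed' x y p" using U by simp
  have A: "N' \<noteq> {}" by simp
  have "is_tree N' Ed'" unfolding is_tree_def by (rule conjI[OF A conjI[OF sg' conjI[OF C acyclic']]])
  then show ?thesis unfolding utree_def by (rule conjI[OF _ E])
qed

lemma dist_old: "a \<in> N \<Longrightarrow> b \<in> N \<Longrightarrow> tree_dist Ed' w a b = tree_dist Ed w a b"
  unfolding tree_dist_def using old_uniq(2) by simp

lemma dist_new: assumes "b \<in> N" shows "tree_dist Ed' w v b = w {v,u} + tree_dist Ed w u b"
proof -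
  define p0 where "p0 = (THE p. simple_path Ed u b p)"
  have p0: "simple_path Ed u b p0" unfolding p0_def using theI'[OF uniq[OF u assms]] .
  have p0ne: "p0 \<noteq> []" and h: "hd p0 = u" using p0 by (auto simp: simple_path_def is_walk_def)
  have np: "simple_path Ed' v b q \<longleftrightarrow> q = v # p0" for q using new_path[OF assms] unfolding p0_def .
  have "(THE p. simple_path Ed' v b p) = v # p0" by (rule the_equality) (simp_all add: np)
  then show ?thesis unfolding tree_dist_def p0_def[symmetric] using pe_cons[OF p0ne, of v] h by simp
qed

lemma dist_new': assumes "b \<in> N" shows "tree_dist Ed' w b v = w {v,u} + tree_dist Ed w u b"
  using dist_new[OF assms] dist_sym[OF new_uniq[OF assms]] by simp

lemma deg: "degree Ed' a = degree Ed a + (if a = v \<or> a = u then 1 else 0)"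
proof -
  have fin: "finite {e \<in> Ed. a \<in> e}" using sg_finite_edges[OF sg] by simp
  have nin: "{v,u} \<notin> Ed" using sg_edge[OF sg, of v u] v by blast
  show ?thesis
  proof (cases "a = v \<or> a = u")
    case True
    then have "{e \<in> Ed'. a \<in> e} = insert {v,u} {e \<in> Ed. a \<in> e}" by auto
    then show ?thesis using fin nin True by (simp add: degree_def)
  next
    case False
    then have "{e \<in> Ed'. a \<in> e} = {e \<in> Ed. a \<in> e}" by auto
    then show ?thesis using False by (simp add: degree_def)
  qed
qed

end


definition wf :: "('n \<Rightarrow> real) \<Rightarrow> ('n \<Rightarrow> real) \<Rightarrow> 'n set \<Rightarrow> real" where
  "wf P h e = (\<Sum>a\<in>e. h a) + (Max (P ` e) - Min (P ` e))"

definition Fd :: "('n \<Rightarrow> real) \<Rightarrow> ('n \<Rightarrow> real) \<Rightarrow> 'n \<Rightarrow> 'n \<Rightarrow> real" where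
  "Fd P h a b = (if a = b then 0 else h a + h b + \<bar>P a - P b\<bar>)"

lemma wf_pair: "a \<noteq> b \<Longrightarrow> wf P h {a,b} = h a + h b + \<bar>P a - P b\<bar>"
  by (simp add: wf_def max_def min_def)

lemma Fd_sym: "Fd P h a b = Fd P h b a" by (simp add: Fd_def abs_minus_commute add.commute)

lemma ext_F:
  assumes E: "ext N Ed u v"
    and D: "\<forall>a\<in>N. \<forall>b\<in>N. tree_dist Ed w a b = Fd P h a b"
    and S: "\<forall>b\<in>N. w {v,u} + Fd P h u b = Fd P h v b"
  shows "\<forall>a\<in>insert v N. \<forall>b\<in>insert v N. tree_dist (insert {v,u} Ed) w a b = Fd P h a b"
proof (intro ballI)
  fix a b assume a: "a \<in> insert v N" and b: "b \<in> insert v N"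
  show "tree_dist (insert {v,u} Ed) w a b = Fd P h a b"
  proof (cases "a = v")
    case True
    show ?thesis
    proof (cases "b = v")
      case True
      then show ?thesis using \<open>a = v\<close> by (simp add: dist_self Fd_def)
    next
      case False
      then have "b \<in> N" using b by simp
      then show ?thesis using ext.dist_new[OF E] D S ext.u[OF E] \<open>a = v\<close> by simp
    qed
  next
    case False
    then have aN: "a \<in> N" using a by simp
    show ?thesis
    proof (cases "b = v")
      case True
      then show ?thesis using ext.dist_new'[OF E aN] D S ext.u[OF E] aN Fd_sym by metis
    next
      case False
      then have "b \<in> N" using b by simp
      then show ?thesis using ext.dist_old[OF E aN] D aN by simp
    qed
  qed
qed

locale cat =
  fixes ys :: "'a list" and P0 h0 :: "'a \<Rightarrow> real"
  assumes dys: "distinct ys" and sys: "sorted_wrt (\<lambda>a b. P0 a \<le> P0 b) ys"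
begin

definition P :: "'a + nat \<Rightarrow> real" where
  "P a = (case a of Inl x \<Rightarrow> P0 x | Inr k \<Rightarrow> P0 (ys ! (length ys - 1 - k)))"
definition h :: "'a + nat \<Rightarrow> real" where
  "h a = (case a of Inl x \<Rightarrow> h0 x | Inr k \<Rightarrow> 0)"
abbreviation "w \<equiv> wf P h"
abbreviation "F \<equiv> Fd P h"

definition Inv :: "'a list \<Rightarrow> ('a + nat) set \<Rightarrow> ('a + nat) set set \<Rightarrow> 'a + nat \<Rightarrow> bool" where
  "Inv xs N Ed e \<longleftrightarrow> utree N Ed \<and> Inl ` set xs \<subseteq> N \<and> N \<subseteq> Inl ` set xs \<union> Inr ` {..<length xs} \<and> e \<in> N \<and>
     (\<forall>x\<in>set xs. degree Ed (Inl x) \<le> 1) \<and> (\<forall>k. Inr k \<in> N \<longrightarrow> 2 \<le> degree Ed (Inr k)) \<and>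
     ((N = {e} \<and> Ed = {}) \<or> (\<exists>j. e = Inr j)) \<and> (\<forall>y\<in>N. P e \<le> P y) \<and> P e = P0 (hd xs) \<and>
     (\<forall>a\<in>N. \<forall>b\<in>N. tree_dist Ed w a b = F a b)"

lemma Inv_base: "Inv [x] {Inl x} {} (Inl x)"
  unfolding Inv_def using utree_single[of "Inl x"]
  by (simp add: degree_def P_def dist_self Fd_def)

lemma Inv_step:
  assumes I: "Inv xs N Ed e" and ne: "xs \<noteq> []" and suf: "ys = zs @ x # xs"
  shows "Inv (x # xs) (insert (Inl x) (insert (Inr (length xs)) N))
             (insert {Inl x, Inr (length xs)} (insert {Inr (length xs), e} Ed)) (Inr (length xs))"
proof -
  define v1 :: "'a + nat" where "v1 = Inr (length xs)"
  define v2 :: "'a + nat" where "v2 = Inl x"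
  define N1 where "N1 = insert v1 N"
  define Ed1 where "Ed1 = insert {v1, e} Ed"
  have xn: "x \<notin> set xs" using dys suf by simp
  have sx: "\<forall>y\<in>set xs. P0 x \<le> P0 y" using sys suf by (simp add: sorted_wrt_append)
  have Pv1: "P v1 = P0 x" unfolding v1_def P_def using suf by (simp add: nth_append)
  have Pv2: "P v2 = P0 x" "h v2 = h0 x" "h v1 = 0" by (simp_all add: v2_def v1_def P_def h_def)
  from I have U: "utree N Ed" and inl: "Inl ` set xs \<subseteq> N" and sub: "N \<subseteq> Inl ` set xs \<union> Inr ` {..<length xs}"
    and eN: "e \<in> N" and dl: "\<forall>y\<in>set xs. degree Ed (Inl y) \<le> 1"
    and dr: "\<forall>k. Inr k \<in> N \<longrightarrow> 2 \<le> degree Ed (Inr k)"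
    and se: "(N = {e} \<and> Ed = {}) \<or> (\<exists>j. e = Inr j)" and Pe: "\<forall>y\<in>N. P e \<le> P y" and Pe0: "P e = P0 (hd xs)"
    and D: "\<forall>a\<in>N. \<forall>b\<in>N. tree_dist Ed w a b = F a b"
    unfolding Inv_def by blast+
  have v1N: "v1 \<notin> N" using sub unfolding v1_def by auto
  interpret E1: ext N Ed e v1 using U eN v1N by unfold_locales
  have U1: "utree N1 Ed1" unfolding N1_def Ed1_def using E1.utree' .
  have v2N1: "v2 \<notin> N1" using sub xn unfolding N1_def v1_def v2_def by auto
  have v1N1: "v1 \<in> N1" unfolding N1_def by simp
  interpret E2: ext N1 Ed1 v1 v2 using U1 v1N1 v2N1 by unfold_locales
  have Pex: "P0 x \<le> P e" using Pe0 sx ne by simp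
  have S1: "\<forall>b\<in>N. w {v1,e} + F e b = F v1 b"
  proof
    fix b assume b: "b \<in> N"
    have v1e: "v1 \<noteq> e" "v1 \<noteq> b" using v1N eN b by auto
    show "w {v1,e} + F e b = F v1 b"
    proof (cases "b = e")
      case True then show ?thesis using v1e by (simp add: wf_pair Fd_def)
    next
      case False
      then have "\<exists>j. e = Inr j" using se b by auto
      then have he: "h e = 0" by (auto simp: h_def)
      have "P e \<le> P b" using Pe b by simp
      then show ?thesis using v1e False he Pv1 Pv2 Pex by (simp add: wf_pair Fd_def)
    qed
  qed
  have D1: "\<forall>a\<in>N1. \<forall>b\<in>N1. tree_dist Ed1 w a b = F a b"
    unfolding N1_def Ed1_def using ext_F[OF E1.ext_axioms D S1] .
  have S2: "\<forall>b\<in>N1. w {v2,v1} + F v1 b = F v2 b"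
  proof
    fix b assume b: "b \<in> N1"
    have "v2 \<noteq> v1" "v2 \<noteq> b" using v2N1 v1N1 b by auto
    then show "w {v2,v1} + F v1 b = F v2 b" using Pv1 Pv2 by (auto simp: wf_pair Fd_def)
  qed
  have D2: "\<forall>a\<in>insert v2 N1. \<forall>b\<in>insert v2 N1. tree_dist (insert {v2,v1} Ed1) w a b = F a b"
    using ext_F[OF E2.ext_axioms D1 S2] .
  have deg: "degree (insert {v2,v1} Ed1) a = degree Ed a + (if a = v1 \<or> a = e then 1 else 0)
     + (if a = v2 \<or> a = v1 then 1 else 0)" for a
    using E2.deg[of a] E1.deg[of a] unfolding Ed1_def by simp
  have dv2: "degree Ed v2 = 0" using deg_out[OF E1.sg] v2N1 unfolding N1_def by simp
  have dv1: "degree Ed v1 = 0" using deg_out[OF E1.sg] v1N by simp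
  show ?thesis
    unfolding Inv_def v1_def[symmetric] v2_def[symmetric] N1_def[symmetric] Ed1_def[symmetric]
  proof (intro conjI)
    show "utree (insert v2 N1) (insert {v2, v1} Ed1)" using E2.utree' .
    show "Inl ` set (x # xs) \<subseteq> insert v2 N1" using inl unfolding N1_def v2_def by auto
    show "insert v2 N1 \<subseteq> Inl ` set (x # xs) \<union> Inr ` {..<length (x # xs)}"
      using sub unfolding N1_def v2_def v1_def by auto
    show "v1 \<in> insert v2 N1" using v1N1 by simp
    show "\<forall>y\<in>set (x # xs). degree (insert {v2, v1} Ed1) (Inl y) \<le> 1"
    proof
      fix y assume y: "y \<in> set (x # xs)"
      show "degree (insert {v2, v1} Ed1) (Inl y) \<le> 1"
      proof (cases "y = x")
        case True then show ?thesis using deg[of v2] dv2 v1N1 v2N1 eN N1_def unfolding v2_def by auto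
      next
        case False
        then have yx: "y \<in> set xs" "Inl y \<noteq> v2" "Inl y \<noteq> v1" using y by (auto simp: v2_def v1_def)
        show ?thesis
        proof (cases "Inl y = e")
          case True
          then have "Ed = {}" using se by auto
          then show ?thesis using deg[of "Inl y"] yx by (simp add: degree_def)
        next
          case False then show ?thesis using deg[of "Inl y"] yx dl by simp
        qed
      qed
    qed
    show "\<forall>k. Inr k \<in> insert v2 N1 \<longrightarrow> 2 \<le> degree (insert {v2, v1} Ed1) (Inr k)"
    proof (intro allI impI)
      fix k assume k: "Inr k \<in> insert v2 N1"
      show "2 \<le> degree (insert {v2, v1} Ed1) (Inr k)"
      proof (cases "Inr k = v1")
        case True then show ?thesis using deg[of v1] by simp
      next
        case False
        then have "Inr k \<in> N" using k unfolding N1_def v2_def by auto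
        then show ?thesis using deg[of "Inr k"] dr by fastforce
      qed
    qed
    show "insert v2 N1 = {v1} \<and> insert {v2, v1} Ed1 = {} \<or> (\<exists>j. v1 = Inr j)" unfolding v1_def by simp
    show "\<forall>y\<in>insert v2 N1. P v1 \<le> P y" using Pe Pex Pv1 Pv2 unfolding N1_def by auto
    show "P v1 = P0 (hd (x # xs))" using Pv1 by simp
    show "\<forall>a\<in>insert v2 N1. \<forall>b\<in>insert v2 N1. tree_dist (insert {v2, v1} Ed1) w a b = F a b" using D2 .
  qed
qed

lemma Inv_exists: "xs \<noteq> [] \<Longrightarrow> (\<exists>zs. ys = zs @ xs) \<Longrightarrow> \<exists>N Ed e. Inv xs N Ed e"
proof (induction xs)
  case (Cons x xs)
  show ?case
  proof (cases "xs = []")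
    case True then show ?thesis using Inv_base by blast
  next
    case False
    obtain zs where zs: "ys = zs @ x # xs" using Cons.prems by blast
    have "\<exists>zs. ys = zs @ xs" using zs by (metis append.assoc append_Cons append_Nil)
    then obtain N Ed e where "Inv xs N Ed e" using Cons.IH False by blast
    then show ?thesis using Inv_step[OF _ False zs] by blast
  qed
qed simp

end


theorem theorem3:
  fixes V :: "'a set" and E :: "'a set set"
  assumes "V \<noteq> {}"
    and "threshold_tolerance_graph V E"
  shows "pcg V E"
proof -
  have sgV: "simple_graph V E" using assms(2) by (simp add: threshold_tolerance_graph_def)
  obtain g t :: "'a \<Rightarrow> real" where pos: "\<forall>x\<in>V. g x > 0 \<and> t x > 0"
    and adj: "\<forall>x\<in>V. \<forall>y\<in>V. x \<noteq> y \<longrightarrow> ({x, y} \<in> E \<longleftrightarrow> g x + g y \<ge> min (t x) (t y))"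
    using assms(2) unfolding threshold_tolerance_graph_def by blast
  have finV: "finite V" using sgV by (simp add: simple_graph_def)
  obtain xs0 where xs0: "set xs0 = V" "distinct xs0" using finite_distinct_list[OF finV] by blast
  define P0 where "P0 x = - t x / 2" for x
  define C where "C = (\<Sum>x\<in>V. t x)"
  define G where "G = (\<Sum>x\<in>V. g x)"
  define h0 where "h0 x = C / 2 + g x - t x / 2" for x
  define ys where "ys = sort_key P0 xs0"
  have ys: "set ys = V" "distinct ys" using xs0 by (simp_all add: ys_def)
  have sys: "sorted_wrt (\<lambda>a b. P0 a \<le> P0 b) ys"
    using sorted_sort_key[of P0 xs0] unfolding ys_def sorted_map .
  interpret cat ys P0 h0 using ys sys by unfold_locales
  have yne: "ys \<noteq> []" using ys assms(1) by auto
  obtain N Ed e where I: "Inv ys N Ed e" using Inv_exists[OF yne] by blast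
  from I have U: "utree N Ed" and inl: "Inl ` V \<subseteq> N" and sub: "N \<subseteq> Inl ` V \<union> Inr ` {..<length ys}"
    and dl: "\<forall>y\<in>V. degree Ed (Inl y) \<le> 1"
    and dr: "\<forall>k. Inr k \<in> N \<longrightarrow> 2 \<le> degree Ed (Inr k)"
    and D: "\<forall>a\<in>N. \<forall>b\<in>N. tree_dist Ed w a b = F a b"
    unfolding Inv_def ys(1) by blast+
  have T: "is_tree N Ed" using U by (simp add: utree_def)
  have tC: "t x \<le> C" if "x \<in> V" for x
    unfolding C_def using member_le_sum[of x V t] that pos finV by (simp add: less_imp_le)
  have h0pos: "h0 x \<ge> 0" if "x \<in> V" for x
  proof -
    have "t x \<le> C" "0 < g x" using tC[OF that] pos that by auto
    then show ?thesis by (simp add: h0_def)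
  qed
  have hpos: "h a \<ge> 0" if "a \<in> N" for a
    using sub that h0pos by (auto simp: h_def)
  have leaves: "leaves N Ed = Inl ` V"
  proof
    show "leaves N Ed \<subseteq> Inl ` V"
    proof
      fix a assume a: "a \<in> leaves N Ed"
      then have "a \<in> N" "degree Ed a \<le> 1" by (auto simp: leaves_def)
      then show "a \<in> Inl ` V" using sub dr by fastforce
    qed
    show "Inl ` V \<subseteq> leaves N Ed" using inl dl by (auto simp: leaves_def)
  qed
  have wpos: "\<forall>x\<in>Ed. w x \<ge> 0"
  proof
    fix x assume x: "x \<in> Ed"
    then obtain a b where ab: "x = {a,b}" "a \<in> N" "b \<in> N" "a \<noteq> b"
      using T unfolding is_tree_def simple_graph_def by blast
    show "w x \<ge> 0" using ab hpos by (simp add: wf_pair)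
  qed
  have Cpos: "0 \<le> C" unfolding C_def using pos by (simp add: less_imp_le sum_nonneg)
  have Gpos: "0 \<le> G" unfolding G_def using pos by (simp add: less_imp_le sum_nonneg)
  have dist: "tree_dist Ed w (Inl u) (Inl v) = C + g u + g v - min (t u) (t v)"
    if "u \<in> V" "v \<in> V" "u \<noteq> v" for u v
  proof -
    have "tree_dist Ed w (Inl u) (Inl v) = h0 u + h0 v + \<bar>P0 u - P0 v\<bar>"
    proof -
      have "Inl u \<in> N" "Inl v \<in> N" using inl that by auto
      then have "tree_dist Ed w (Inl u) (Inl v) = F (Inl u) (Inl v)" using D by blast
      also have "\<dots> = h0 u + h0 v + \<bar>P0 u - P0 v\<bar>" using that by (simp add: Fd_def h_def P_def)
      finally show ?thesis .
    qed
    moreover have "\<bar>P0 u - P0 v\<bar> = (if t u \<le> t v then (t v - t u) / 2 else (t u - t v) / 2)"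
      by (simp add: P0_def abs_if)
    ultimately show ?thesis by (cases "t u \<le> t v") (simp_all add: h0_def min_def field_simps)
  qed
  have gle: "g u + g v \<le> G" if "u \<in> V" "v \<in> V" "u \<noteq> v" for u v
  proof -
    have "(\<Sum>x\<in>{u,v}. g x) \<le> G" unfolding G_def
      using that finV pos by (intro sum_mono2) (auto simp: less_imp_le)
    then show ?thesis using that by simp
  qed
  show ?thesis unfolding pcg_def
  proof (intro conjI exI)
    show "simple_graph V E" by (rule sgV)
    show "is_tree N Ed" by (rule T)
    show "leaves N Ed = Inl ` V" by (rule leaves)
    show "\<forall>x\<in>Ed. w x \<ge> 0" by (rule wpos)
    show "0 \<le> C" by (rule Cpos)
    show "C \<le> C + G" using Gpos by simp
    show "\<forall>u\<in>V. \<forall>v\<in>V. u \<noteq> v \<longrightarrow>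
           ({u, v} \<in> E \<longleftrightarrow> C \<le> tree_dist Ed w (Inl u) (Inl v) \<and> tree_dist Ed w (Inl u) (Inl v) \<le> C + G)"
    proof (intro ballI impI)
      fix u v assume uv: "u \<in> V" "v \<in> V" "u \<noteq> v"
      have "0 < min (t u) (t v)" using pos uv by simp
      then show "{u, v} \<in> E \<longleftrightarrow> C \<le> tree_dist Ed w (Inl u) (Inl v) \<and> tree_dist Ed w (Inl u) (Inl v) \<le> C + G"
        using dist[OF uv] gle[OF uv] adj uv by auto
    qed
  qed
qed

end
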